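(* Suppose that $\phi\in\mathbb{Q}(x)$ has degree $2$, has a $2$-periodic critical point, and that $\operatorname{Aut}(\phi)$ is nontrivial. Then $\phi$ is linearly conjugate over $\mathbb{Q}$ to a map of the form $\psi_v=\dfrac{2x-1}{vx^2-1}$ with $v\in\mathbb{Q}\setminus\{0,4\}$.
   Context: A point $P\in\mathbb{P}^1(\overline{\mathbb{Q}})$ is $2$-periodic if $\phi^2(P)=P\neq\phi(P)$; a critical point is a point where $\phi:\mathbb{P}^1\to\mathbb{P}^1$ ramifies. $\operatorname{Aut}(\phi)$ is the group of degree-one $\sigma\in\overline{\mathbb{Q}}(x)$ with $\sigma^{-1}\circ\phi\circ\sigma=\phi$. Linear conjugacy over $\mathbb{Q}$: $\psi=\sigma^{-1}\circ\phi\circ\sigma$ for some degree-one $\sigma\in\mathbb{Q}(x)$. *)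

theory Defs
  imports "HOL-Computational_Algebra.Computational_Algebra"
begin

text \<open>A rational map over Q is represented by a pair (p, q) of rational polynomials,
  phi = p / q.
  Q-bar is realised as the algebraic complex numbers; points of P^1(Q-bar) are
  nonzero pairs (a, b) of algebraic complex numbers up to scaling.\<close>

definition rat_map_degree :: "rat poly \<times> rat poly \<Rightarrow> nat \<Rightarrow> bool" where
  "rat_map_degree f d \<longleftrightarrow> coprime (fst f) (snd f) \<and> max (degree (fst f)) (degree (snd f)) = d"

definition hom :: "nat \<Rightarrow> rat poly \<Rightarrow> complex \<times> complex \<Rightarrow> complex" where
  "hom d p z = (\<Sum>i\<le>d. of_rat (coeff p i) * fst z ^ i * snd z ^ (d - i))"

text \<open>Same, with polynomial arguments (for restricting to a line through a point).\<close>
definition hom_poly :: "nat \<Rightarrow> rat poly \<Rightarrow> complex poly \<Rightarrow> complex poly \<Rightarrow> complex poly" where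
  "hom_poly d p u v = (\<Sum>i\<le>d. [:of_rat (coeff p i):] * u ^ i * v ^ (d - i))"

definition map_P1 :: "nat \<Rightarrow> rat poly \<times> rat poly \<Rightarrow> complex \<times> complex \<Rightarrow> complex \<times> complex" where
  "map_P1 d f z = (hom d (fst f) z, hom d (snd f) z)"

definition is_P1_point :: "complex \<times> complex \<Rightarrow> bool" where
  "is_P1_point z \<longleftrightarrow> z \<noteq> (0, 0) \<and> algebraic (fst z) \<and> algebraic (snd z)"

definition proj_eq :: "complex \<times> complex \<Rightarrow> complex \<times> complex \<Rightarrow> bool" where
  "proj_eq z w \<longleftrightarrow> fst z * snd w = fst w * snd z"

definition two_periodic :: "nat \<Rightarrow> rat poly \<times> rat poly \<Rightarrow> complex \<times> complex \<Rightarrow> bool" where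
  "two_periodic d f z \<longleftrightarrow> is_P1_point z \<and> proj_eq (map_P1 d f (map_P1 d f z)) z
      \<and> \<not> proj_eq (map_P1 d f z) z"

text \<open>Ramification: z = (a,b) is a critical point iff z is a root of multiplicity
  at least 2 of the fibre form  P(x,y) Q(z) - Q(x,y) P(z)  (i.e. the ramification index
  e_z(phi) is at least 2).  The multiplicity is computed by restricting the fibre form to
  the line (a,b) + t (c,d) with (c,d) independent of (a,b).\<close>
definition fibre_line_poly :: "nat \<Rightarrow> rat poly \<times> rat poly \<Rightarrow> complex \<times> complex \<Rightarrow> complex poly" where
  "fibre_line_poly d f z =
     (let a = fst z; b = snd z;
          c = (if b = 0 then 0 else 1); e = (if b = 0 then 1 else 0);
          u = [:a, c:]; v = [:b, e:]
      in hom_poly d (fst f) u v * [:hom d (snd f) z:] - hom_poly d (snd f) u v * [:hom d (fst f) z:])"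

definition is_critical_point :: "nat \<Rightarrow> rat poly \<times> rat poly \<Rightarrow> complex \<times> complex \<Rightarrow> bool" where
  "is_critical_point d f z \<longleftrightarrow> is_P1_point z \<and> order 0 (fibre_line_poly d f z) \<ge> 2"

definition mob :: "complex \<times> complex \<times> complex \<times> complex \<Rightarrow> complex \<times> complex \<Rightarrow> complex \<times> complex" where
  "mob s z = (case s of (al, be, ga, de) \<Rightarrow> (al * fst z + be * snd z, ga * fst z + de * snd z))"

definition mob_det :: "complex \<times> complex \<times> complex \<times> complex \<Rightarrow> complex" where
  "mob_det s = (case s of (al, be, ga, de) \<Rightarrow> al * de - be * ga)"

definition is_identity_mob :: "complex \<times> complex \<times> complex \<times> complex \<Rightarrow> bool" where
  "is_identity_mob s = (case s of (al, be, ga, de) \<Rightarrow> be = 0 \<and> ga = 0 \<and> al = de)"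

definition in_Aut :: "nat \<Rightarrow> rat poly \<times> rat poly \<Rightarrow> complex \<times> complex \<times> complex \<times> complex \<Rightarrow> bool" where
  "in_Aut d f s \<longleftrightarrow>
     (case s of (al, be, ga, de) \<Rightarrow> algebraic al \<and> algebraic be \<and> algebraic ga \<and> algebraic de)
     \<and> mob_det s \<noteq> 0
     \<and> (\<forall>z. is_P1_point z \<longrightarrow> proj_eq (map_P1 d f (mob s z)) (mob s (map_P1 d f z)))"

definition Aut_nontrivial :: "nat \<Rightarrow> rat poly \<times> rat poly \<Rightarrow> bool" where
  "Aut_nontrivial d f \<longleftrightarrow> (\<exists>s. in_Aut d f s \<and> \<not> is_identity_mob s)"

definition lin_conj_over_Q :: "nat \<Rightarrow> rat poly \<times> rat poly \<Rightarrow> rat poly \<times> rat poly \<Rightarrow> bool" where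
  "lin_conj_over_Q d f g \<longleftrightarrow>
     (\<exists>al be ga de :: rat. al * de - be * ga \<noteq> 0 \<and>
        (\<forall>z. is_P1_point z \<longrightarrow>
           proj_eq (mob (of_rat al, of_rat be, of_rat ga, of_rat de) (map_P1 d g z))
                   (map_P1 d f (mob (of_rat al, of_rat be, of_rat ga, of_rat de) z))))"

definition psi :: "rat \<Rightarrow> rat poly \<times> rat poly" where
  "psi v = ([:-1, 2:], [:-1, 0, v:])"

end

theory Submission
  imports Defs "HOL-Computational_Algebra.Field_as_Ring"
begin

definition qf :: "'a::comm_ring_1 \<times> 'a \<times> 'a \<Rightarrow> 'a \<times> 'a \<Rightarrow> 'a" where
  "qf k z = fst k * snd z ^ 2 + fst (snd k) * (fst z * snd z) + snd (snd k) * fst z ^ 2"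
definition bq :: "'a::comm_ring_1 \<times> 'a \<times> 'a \<Rightarrow> 'a \<times> 'a \<Rightarrow> 'a \<times> 'a \<Rightarrow> 'a" where
  "bq k z w = 2 * fst k * (snd z * snd w) + fst (snd k) * (fst z * snd w + snd z * fst w)
     + 2 * snd (snd k) * (fst z * fst w)"
definition Fm :: "('a::comm_ring_1 \<times> 'a \<times> 'a) \<times> ('a \<times> 'a \<times> 'a) \<Rightarrow> 'a \<times> 'a \<Rightarrow> 'a \<times> 'a" where
  "Fm K z = (qf (fst K) z, qf (snd K) z)"
definition Bl :: "('a::comm_ring_1 \<times> 'a \<times> 'a) \<times> ('a \<times> 'a \<times> 'a) \<Rightarrow> 'a \<times> 'a \<Rightarrow> 'a \<times> 'a \<Rightarrow> 'a \<times> 'a" where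
  "Bl K z w = (bq (fst K) z w, bq (snd K) z w)"
definition mb :: "'a::comm_ring_1 \<times> 'a \<times> 'a \<times> 'a \<Rightarrow> 'a \<times> 'a \<Rightarrow> 'a \<times> 'a" where
  "mb s z = (fst s * fst z + fst (snd s) * snd z, fst (snd (snd s)) * fst z + snd (snd (snd s)) * snd z)"
definition cr :: "'a::comm_ring_1 \<times> 'a \<Rightarrow> 'a \<times> 'a \<Rightarrow> 'a" where
  "cr z w = fst z * snd w - fst w * snd z"
definition adj :: "'a::comm_ring_1 \<times> 'a \<times> 'a \<times> 'a \<Rightarrow> 'a \<times> 'a \<times> 'a \<times> 'a" where
  "adj s = (snd (snd (snd s)), - fst (snd s), - fst (snd (snd s)), fst s)"
definition dt :: "'a::comm_ring_1 \<times> 'a \<times> 'a \<times> 'a \<Rightarrow> 'a" where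
  "dt s = fst s * snd (snd (snd s)) - fst (snd s) * fst (snd (snd s))"
definition mm :: "'a::comm_ring_1 \<times> 'a \<times> 'a \<times> 'a \<Rightarrow> 'a \<times> 'a \<times> 'a \<times> 'a \<Rightarrow> 'a \<times> 'a \<times> 'a \<times> 'a" where
  "mm s t = (case s of (a,b,c,d) \<Rightarrow> case t of (e,f,g,h) \<Rightarrow> (a*e+b*g, a*f+b*h, c*e+d*g, c*f+d*h))"
definition sc :: "'a::comm_ring_1 \<Rightarrow> 'a \<times> 'a \<Rightarrow> 'a \<times> 'a" where
  "sc l z = (l * fst z, l * snd z)"

lemma qf_simp [simp]: "qf (k0,k1,k2) (x,y) = k0 * y^2 + k1 * (x*y) + k2 * x^2" by (simp add: qf_def)
lemma bq_simp [simp]: "bq (k0,k1,k2) (x,y) (z,w) = 2*k0*(y*w) + k1*(x*w+y*z) + 2*k2*(x*z)" by (simp add: bq_def)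
lemma Fm_simp [simp]: "Fm (k,l) z = (qf k z, qf l z)" by (simp add: Fm_def)
lemma Bl_simp [simp]: "Bl (k,l) z w = (bq k z w, bq l z w)" by (simp add: Bl_def)
lemma mb_simp [simp]: "mb (a,b,c,d) (x,y) = (a*x+b*y, c*x+d*y)" by (simp add: mb_def)
lemma cr_simp [simp]: "cr (x,y) (z,w) = x*w - z*y" by (simp add: cr_def)
lemma adj_simp [simp]: "adj (a,b,c,d) = (d,-b,-c,a)" by (simp add: adj_def)
lemma dt_simp [simp]: "dt (a,b,c,d) = a*d-b*c" by (simp add: dt_def)
lemma mm_simp [simp]: "mm (a,b,c,d) (e,f,g,h) = (a*e+b*g, a*f+b*h, c*e+d*g, c*f+d*h)" by (simp add: mm_def)
lemma sc_simp [simp]: "sc l (x,y) = (l*x, l*y)" by (simp add: sc_def)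

lemma mb_mm: "mb (mm s t) z = mb s (mb t z)"
  by (cases s; cases t; cases z) (simp add: algebra_simps)
lemma mb_adj: "mb s (mb (adj s) z) = sc (dt s) z"
  by (cases s; cases z) (simp add: algebra_simps)
lemma adj_mb: "mb (adj s) (mb s z) = sc (dt s) z"
  by (cases s; cases z) (simp add: algebra_simps)
lemma cr_mb: "cr (mb s z) (mb s w) = dt s * cr z w"
  by (cases s; cases z; cases w) (simp add: algebra_simps)
lemma dt_mm: "dt (mm s t) = dt s * dt t"
  by (cases s; cases t) (simp add: algebra_simps)
lemma adj_mm: "adj (mm s t) = mm (adj t) (adj s)"
  by (cases s; cases t) (simp add: algebra_simps)
lemma Fm_sc: "Fm K (sc l z) = sc (l^2) (Fm K z)"
  by (cases K; cases "fst K"; cases "snd K"; cases z) (simp add: algebra_simps power2_eq_square)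
lemma mb_sc: "mb s (sc l z) = sc l (mb s z)"
  by (cases s; cases z) (simp add: algebra_simps)
lemma cr_sc: "cr (sc a z) (sc b w) = a * b * cr z w"
  by (cases z; cases w) (simp add: algebra_simps)
lemma dt_adj: "dt (adj s) = dt s"
  by (cases s) (simp add: algebra_simps)

definition kq :: "rat poly \<Rightarrow> complex \<times> complex \<times> complex" where
  "kq p = (of_rat (coeff p 0), of_rat (coeff p 1), of_rat (coeff p 2))"
definition KK :: "rat poly \<times> rat poly \<Rightarrow> (complex \<times> complex \<times> complex) \<times> (complex \<times> complex \<times> complex)" where
  "KK f = (kq (fst f), kq (snd f))"

lemma hom_qf: "hom 2 p z = qf (kq p) z"
  by (cases z) (simp add: hom_def kq_def numeral_2_eq_2 atMost_Suc algebra_simps power2_eq_square)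

lemma map_P1_Fm: "map_P1 2 f z = Fm (KK f) z"
  by (cases f) (simp add: map_P1_def KK_def hom_qf Fm_def)

lemma mob_mb: "mob s z = mb s z"
  by (cases s; cases z) (simp add: mob_def)

lemma proj_eq_cr: "proj_eq z w \<longleftrightarrow> cr z w = 0"
  by (cases z; cases w) (simp add: proj_eq_def)

lemma mob_det_dt: "mob_det s = dt s"
  by (cases s) (simp add: mob_det_def)

lemma mp_add: "map_poly (of_rat::rat\<Rightarrow>complex) (p + q) = map_poly of_rat p + map_poly of_rat q"
  by (intro poly_eqI) (simp add: coeff_map_poly of_rat_add)

lemma mp_mult: "map_poly (of_rat::rat\<Rightarrow>complex) (p * q) = map_poly of_rat p * map_poly of_rat q"
  by (induction p rule: pCons_induct) (simp_all add: map_poly_pCons map_poly_smult mp_add of_rat_mult)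

lemma deg2_expand:
  fixes p :: "'a::comm_ring_1 poly"
  assumes "degree p \<le> 2"
  shows "p = [:coeff p 0, coeff p 1, coeff p 2:]"
proof (rule poly_eqI)
  fix n show "coeff p n = coeff [:coeff p 0, coeff p 1, coeff p 2:] n"
  proof (cases "n \<le> 2")
    case True
    then have "n = 0 \<or> n = 1 \<or> n = 2" by auto
    then show ?thesis by (auto simp: coeff_pCons)
  next
    case False
    then have "n = Suc (Suc (Suc (n - 3)))" by auto
    then show ?thesis using False assms by (metis coeff_eq_0 coeff_pCons_Suc coeff_0 not_le le_less_trans order.refl)
  qed
qed

lemma poly_mp_qf:
  assumes "degree p \<le> 2"
  shows "poly (map_poly (of_rat::rat\<Rightarrow>complex) p) x = qf (kq p) (x, 1)"
proof -
  have "poly (map_poly (of_rat::rat\<Rightarrow>complex) p) x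
      = poly (map_poly of_rat [:coeff p 0, coeff p 1, coeff p 2:]) x"
    using deg2_expand[OF assms] by metis
  also have "\<dots> = qf (kq p) (x, 1)"
    by (simp add: map_poly_pCons kq_def algebra_simps power2_eq_square)
  finally show ?thesis .
qed

lemma qf_dehom:
  fixes a b :: "'a::field"
  assumes "b \<noteq> 0" shows "qf k (a,b) = b^2 * qf k (a/b, 1)"
proof -
  obtain k0 k1 k2 where k: "k = (k0,k1,k2)" by (metis prod.exhaust)
  have "a = (a/b) * b" using assms by simp
  then show ?thesis unfolding k qf_simp by (metis (no_types, lifting) assms ring_class.ring_distribs(1) mult.assoc mult.commute power2_eq_square mult_1 power_one mult_1_right)
qed

lemma ND:
  assumes deg: "rat_map_degree f 2" and z: "Fm (KK f) z = (0,0)"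
  shows "z = (0,0)"
proof -
  obtain p q where f: "f = (p,q)" by (cases f)
  obtain a b where zab: "z = (a,b)" by (cases z)
  have cop: "coprime p q" and md: "max (degree p) (degree q) = 2"
    using deg f by (auto simp: rat_map_degree_def)
  have dp: "degree p \<le> 2" and dq: "degree q \<le> 2" using md by auto
  have zp: "qf (kq p) (a,b) = 0" and zq: "qf (kq q) (a,b) = 0"
    using z f zab by (auto simp: KK_def)
  show ?thesis
  proof (cases "b = 0")
    case False
    define x where "x = a / b"
    have hom: "qf (kq r) (a,b) = b^2 * qf (kq r) (x,1)" for r
      using False unfolding x_def by (rule qf_dehom)
    have px: "poly (map_poly of_rat p) x = (0::complex)"
      using hom[of p] zp False poly_mp_qf[OF dp] by simp
    have qx: "poly (map_poly of_rat q) x = (0::complex)"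
      using hom[of q] zq False poly_mp_qf[OF dq] by simp
    obtain u w where uw: "u * p + w * q = 1"
      using bezout_coefficients_fst_snd[of p q] coprime_imp_gcd_eq_1[OF cop] by metis
    have "poly (map_poly (of_rat::rat\<Rightarrow>complex) (u * p + w * q)) x = 1"
      unfolding uw by simp
    then have "poly (map_poly of_rat u) x * poly (map_poly of_rat p) x
       + poly (map_poly of_rat w) x * poly (map_poly of_rat q) x = (1::complex)"
      by (simp only: mp_add mp_mult poly_add poly_mult)
    then show ?thesis using px qx by simp
  next
    case True
    show ?thesis
    proof (cases "a = 0")
      case True with \<open>b = 0\<close> zab show ?thesis by simp
    next
      case False
      have "of_rat (coeff p 2) * a^2 = 0" "of_rat (coeff q 2) * a^2 = 0"
        using zp zq \<open>b = 0\<close> by (auto simp: kq_def)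
      then have c2: "coeff p 2 = 0" "coeff q 2 = 0" using False by auto
      have "degree p = 2 \<or> degree q = 2" using md by (auto simp: max_def split: if_splits)
      then show ?thesis
      proof
        assume "degree p = 2"
        then have "p \<noteq> 0" by auto
        then have "coeff p (degree p) \<noteq> 0" by simp
        with \<open>degree p = 2\<close> c2 show ?thesis by simp
      next
        assume "degree q = 2"
        then have "q \<noteq> 0" by auto
        then have "coeff q (degree q) \<noteq> 0" by simp
        with \<open>degree q = 2\<close> c2 show ?thesis by simp
      qed
    qed
  qed
qed

lemma hom_poly_expand:
  "hom_poly 2 p [:a, c:] [:b, e:] = [:qf (kq p) (a,b), bq (kq p) (a,b) (c,e), qf (kq p) (c,e):]"
proof -
  have "poly (hom_poly 2 p [:a, c:] [:b, e:]) t = poly [:qf (kq p) (a,b), bq (kq p) (a,b) (c,e), qf (kq p) (c,e):] t" for t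
    by (simp add: hom_poly_def poly_sum kq_def numeral_2_eq_2 atMost_Suc algebra_simps power2_eq_square)
  then show ?thesis using poly_eq_poly_eq_iff by blast
qed

lemma crit0:
  assumes "is_critical_point 2 f c"
  shows "c \<noteq> (0,0)" "\<exists>e. cr c e \<noteq> 0 \<and> cr (Bl (KK f) c e) (Fm (KK f) c) = 0"
proof -
  obtain p q where f: "f = (p,q)" by (cases f)
  obtain a b where cab: "c = (a,b)" by (cases c)
  show c0: "c \<noteq> (0,0)" using assms by (auto simp: is_critical_point_def is_P1_point_def)
  define cc where "cc = (if b = 0 then 0 else 1::complex)"
  define ee where "ee = (if b = 0 then 1 else 0::complex)"
  have F: "fibre_line_poly 2 f c =
     [:qf (kq p) (a,b), bq (kq p) (a,b) (cc,ee), qf (kq p) (cc,ee):] * [:qf (kq q) (a,b):]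
     - [:qf (kq q) (a,b), bq (kq q) (a,b) (cc,ee), qf (kq q) (cc,ee):] * [:qf (kq p) (a,b):]"
    by (simp add: fibre_line_poly_def f cab cc_def ee_def hom_poly_expand hom_qf Let_def)
  have c1: "coeff (fibre_line_poly 2 f c) 1 =
      bq (kq p) (a,b) (cc,ee) * qf (kq q) (a,b) - bq (kq q) (a,b) (cc,ee) * qf (kq p) (a,b)"
    unfolding F by (simp add: algebra_simps)
  have "order 0 (fibre_line_poly 2 f c) \<ge> 2" using assms by (simp add: is_critical_point_def)
  then have "[:-0, 1:] ^ 2 dvd fibre_line_poly 2 f c"
    using order_1 power_le_dvd by blast
  then obtain g where g: "fibre_line_poly 2 f c = [:0, 1:] ^ 2 * g" by auto
  have "coeff (fibre_line_poly 2 f c) 1 = 0" unfolding g by (simp add: power2_eq_square)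
  then have h: "cr (Bl (KK f) c (cc,ee)) (Fm (KK f) c) = 0"
    using c1 by (simp add: KK_def f cab algebra_simps)
  have "cr c (cc,ee) \<noteq> 0" using c0 by (auto simp: cab cc_def ee_def)
  with h show "\<exists>e. cr c e \<noteq> 0 \<and> cr (Bl (KK f) c e) (Fm (KK f) c) = 0" by blast
qed

lemma crit_all:
  fixes K :: "('a::field \<times> 'a \<times> 'a) \<times> ('a \<times> 'a \<times> 'a)"
  assumes "cr c e0 \<noteq> 0" "cr (Bl K c e0) (Fm K c) = 0"
  shows "cr (Bl K c e) (Fm K c) = 0"
proof -
  obtain k0 k1 k2 l0 l1 l2 where K: "K = ((k0,k1,k2),(l0,l1,l2))" by (metis prod.exhaust)
  obtain c1 c2 where c: "c = (c1,c2)" by (cases c)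
  obtain e1 e2 where e: "e = (e1,e2)" by (cases e)
  obtain f1 f2 where e0: "e0 = (f1,f2)" by (cases e0)
  have "cr c e0 * cr (Bl K c e) (Fm K c) = cr c e * cr (Bl K c e0) (Fm K c)"
    unfolding K c e e0 by (simp add: algebra_simps power2_eq_square)
  with assms show ?thesis by simp
qed

definition Dg where "Dg K s z = cr (Fm K (mb s z)) (mb s (Fm K z))"
definition lk :: "'a::comm_ring_1 \<times> 'a \<times> 'a \<Rightarrow> 'a poly \<times> 'a poly \<times> 'a poly" where
  "lk k = ([:fst k:], [:fst (snd k):], [:snd (snd k):])"
definition ls :: "'a::comm_ring_1 \<times> 'a \<times> 'a \<times> 'a \<Rightarrow> 'a poly \<times> 'a poly \<times> 'a poly \<times> 'a poly" where
  "ls s = ([:fst s:], [:fst (snd s):], [:fst (snd (snd s)):], [:snd (snd (snd s)):])"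

lemma poly_Dg: "poly (Dg (lk (fst K), lk (snd K)) (ls s) (U,V)) t = Dg K s (poly U t, poly V t)"
proof -
  obtain k0 k1 k2 l0 l1 l2 where K: "K = ((k0,k1,k2),(l0,l1,l2))" by (metis prod.exhaust)
  obtain a b c d where s: "s = (a,b,c,d)" by (metis prod.exhaust)
  show ?thesis unfolding K s by (simp add: Dg_def lk_def ls_def)
qed

lemma Dg_sc: "Dg K s (sc l z) = l^4 * Dg K s z"
  unfolding Dg_def Fm_sc mb_sc cr_sc by (simp add: power_add[symmetric])

lemma rat_roots_zero:
  fixes P :: "complex poly"
  assumes "\<And>t::rat. poly P (of_rat t) = 0"
  shows "P = 0"
proof (rule ccontr)
  assume "P \<noteq> 0"
  then have fin: "finite {x. poly P x = 0}" by (rule poly_roots_finite)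
  have "range (of_rat :: rat \<Rightarrow> complex) \<subseteq> {x. poly P x = 0}" using assms by auto
  then have "finite (range (of_rat :: rat \<Rightarrow> complex))" using fin finite_subset by blast
  moreover have "inj (of_rat :: rat \<Rightarrow> complex)" by (simp add: inj_def)
  ultimately have "finite (UNIV :: rat set)" using finite_imageD by blast
  then show False using infinite_UNIV_char_0 by blast
qed

lemma aut_ext:
  assumes A: "\<forall>z. is_P1_point z \<longrightarrow> proj_eq (map_P1 2 f (mob s z)) (mob s (map_P1 2 f z))"
  shows "Dg (KK f) s z = 0"
proof -
  let ?K = "KK f"
  have base: "Dg ?K s (of_rat t, of_rat t') = 0" if "(t, t') \<noteq> (0,0)" for t t'
  proof -
    have "is_P1_point (of_rat t, of_rat t')"
      using that by (auto simp: is_P1_point_def intro!: rat_imp_algebraic)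
    then show ?thesis using A by (auto simp: Dg_def proj_eq_cr map_P1_Fm mob_mb)
  qed
  have ch1: "Dg ?K s (x, 1) = 0" for x
  proof -
    let ?P = "Dg (lk (fst ?K), lk (snd ?K)) (ls s) ([:0,1:], 1)"
    have "poly ?P (of_rat t) = 0" for t
      using base[of t 1] by (simp add: poly_Dg)
    then have "?P = 0" by (rule rat_roots_zero)
    then show ?thesis using poly_Dg[of ?K s "[:0,1:]" 1 x] by simp
  qed
  have ch2: "Dg ?K s (1, x) = 0" for x
  proof -
    let ?P = "Dg (lk (fst ?K), lk (snd ?K)) (ls s) (1, [:0,1:])"
    have "poly ?P (of_rat t) = 0" for t
      using base[of 1 t] by (simp add: poly_Dg)
    then have "?P = 0" by (rule rat_roots_zero)
    then show ?thesis using poly_Dg[of ?K s 1 "[:0,1:]" x] by simp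
  qed
  obtain x y where z: "z = (x,y)" by (cases z)
  show ?thesis
  proof (cases "y = 0")
    case False
    have "z = sc y (x/y, 1)" using False z by simp
    then have "Dg ?K s z = y^4 * Dg ?K s (x/y, 1)" by (simp only: Dg_sc)
    then show ?thesis using ch1 by simp
  next
    case True
    have "z = sc x (1, 0)" using True z by simp
    then have "Dg ?K s z = x^4 * Dg ?K s (1, 0)" by (simp only: Dg_sc)
    then show ?thesis using ch2[of 0] by simp
  qed
qed

definition Dp :: "complex \<Rightarrow> complex \<Rightarrow> complex \<Rightarrow> complex \<Rightarrow> complex \<Rightarrow> complex \<Rightarrow> complex \<Rightarrow> complex \<Rightarrow> complex \<Rightarrow> complex" where
  "Dp A B C a b c d x y =
     (B*(a*x+b*y)*(c*x+d*y) + C*(c*x+d*y)^2) * (c*(B*x*y+C*y^2) + d*A*x^2)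
     - (A*(a*x+b*y)^2) * (a*(B*x*y+C*y^2) + b*A*x^2)"

lemma alg1:
  assumes A: "A \<noteq> 0" and C: "C \<noteq> 0" and det: "a*d - b*c \<noteq> 0"
    and D: "\<And>x y. Dp A B C a b c d x y = 0" and B: "B \<noteq> 0"
  shows "b = 0 \<and> c = 0 \<and> a = d"
proof -
  have e4: "A * (c*d*(B*a+C*c) - A*a^2*b) = 0" using D[of 1 0] by (simp add: Dp_def algebra_simps power2_eq_square)
  have e0: "C * (c*d*(B*b+C*d) - A*a*b^2) = 0" using D[of 0 1] by (simp add: Dp_def algebra_simps power2_eq_square)
  have e4': "c*d*(B*a+C*c) = A*a^2*b" using e4 A by simp
  have e0': "c*d*(B*b+C*d) = A*a*b^2" using e0 C by simp
  show ?thesis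
  proof (cases "b = 0")
    case True
    have "d \<noteq> 0" using det True by auto
    have "C * C * c * (d * d) = 0" using e0' True by (simp add: algebra_simps power2_eq_square)
    hence c0: "c = 0" using C \<open>d \<noteq> 0\<close> by simp
    have h1: "Dp A B C a b c d 1 1 = 0" "Dp A B C a b c d 1 (-1) = 0" using D by auto
    have "A * (B*a*(d^2 - a^2) + C*(d^3 - a^3)) = 0" using h1(1) True c0 by (simp add: Dp_def algebra_simps power2_eq_square power3_eq_cube)
    moreover have "A * (B*a*(d^2 - a^2) - C*(d^3 - a^3)) = 0" using h1(2) True c0 by (simp add: Dp_def algebra_simps power2_eq_square power3_eq_cube)
    ultimately have s1: "B*a*(d^2 - a^2) + C*(d^3 - a^3) = 0" and s2: "B*a*(d^2 - a^2) - C*(d^3 - a^3) = 0" using A by auto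
    from s1 s2 have "B*a*(d^2 - a^2) = 0" "C*(d^3 - a^3) = 0" by algebra+
    hence q1: "d^2 = a^2" and q2: "d^3 = a^3" using B C det True by auto
    have "a^2 * (d - a) = 0" using q1 q2 by (simp add: algebra_simps power2_eq_square power3_eq_cube)
    hence "d = a" using det True by auto
    thus ?thesis using True c0 by simp
  next
    case bn: False
    show ?thesis
    proof (cases "a = 0")
      case True
      have "c \<noteq> 0" using det True by auto
      have "C*c*c*d = 0" using e4' True by (simp add: algebra_simps)
      hence d0: "d = 0" using C \<open>c \<noteq> 0\<close> by simp
      have h: "Dp A B C a b c d 1 1 = 0" "Dp A B C a b c d 1 (-1) = 0" "Dp A B C a b c d 2 1 = 0" using D by auto
      have "c*c*C*B = 0"
        using h True d0 by (simp add: Dp_def algebra_simps power2_eq_square) algebra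
      thus ?thesis using C B \<open>c \<noteq> 0\<close> by simp
    next
      case an: False
      have "c*d*C*(b*c - a*d) = 0" using e4' e0' by algebra
      hence "c*d = 0" using C det by (auto simp: algebra_simps)
      hence "A*a^2*b = 0" using e4' by auto
      thus ?thesis using A an bn by simp
    qed
  qed
qed


lemma bq_sym: "bq k z w = bq k w z"
  by (cases k; cases z; cases w) (simp add: algebra_simps)

lemma qf_lin: "qf k (a*x + b*y, c*x + d*y) = x^2 * qf k (a,c) + x*y * bq k (a,c) (b,d) + y^2 * qf k (b,d)"
  by (cases k) (simp add: algebra_simps power2_eq_square)

lemma part1:
  fixes K :: "(complex \<times> complex \<times> complex) \<times> (complex \<times> complex \<times> complex)"
  assumes ND: "\<And>z. Fm K z = (0,0) \<Longrightarrow> z = (0,0)"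
    and c0: "c \<noteq> (0,0)"
    and crit: "\<And>e. cr (Bl K c e) (Fm K c) = 0"
    and per1: "cr (Fm K (Fm K c)) c = 0" and per2: "cr (Fm K c) c \<noteq> 0"
    and aut: "\<And>z. Dg K s z = 0" and sdet: "dt s \<noteq> 0"
    and snid: "\<not> (fst (snd s) = 0 \<and> fst (snd (snd s)) = 0 \<and> fst s = snd (snd (snd s)))"
  shows "\<exists>T A. dt T \<noteq> 0 \<and> A \<noteq> 0 \<and> (\<forall>z. mb (adj T) (Fm K (mb T z)) = (dt T * snd z ^ 2, A * fst z ^ 2))"
proof -
  obtain k0 k1 k2 l0 l1 l2 where K: "K = ((k0,k1,k2),(l0,l1,l2))" by (metis prod.exhaust)
  obtain c1 c2 where c: "c = (c1,c2)" by (cases c)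
  obtain d1 d2 where d: "Fm K c = (d1,d2)" by (cases "Fm K c")
  obtain e1 e2 where e: "Fm K (d1,d2) = (e1,e2)" by (cases "Fm K (d1,d2)")
  obtain b1 b2 where b: "Bl K (d1,d2) c = (b1,b2)" by (cases "Bl K (d1,d2) c")
  define T where "T = (d1, c1, d2, c2)"
  define \<Delta> where "\<Delta> = d1*c2 - c1*d2"
  define A where "A = d1*e2 - e1*d2"
  define B1 where "B1 = c2*b1 - c1*b2"
  have dtT: "dt T = \<Delta>" by (simp add: T_def \<Delta>_def)
  have D0: "\<Delta> \<noteq> 0" using per2 d c by (simp add: \<Delta>_def)
  have hd1: "d1 = qf (k0,k1,k2) (c1,c2)" and hd2: "d2 = qf (l0,l1,l2) (c1,c2)" using d K c by auto
  have he1: "e1 = qf (k0,k1,k2) (d1,d2)" and he2: "e2 = qf (l0,l1,l2) (d1,d2)" using e K by auto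
  have hb1: "b1 = bq (k0,k1,k2) (d1,d2) (c1,c2)" and hb2: "b2 = bq (l0,l1,l2) (d1,d2) (c1,c2)" using b K c by auto
  have p1: "e1*c2 - c1*e2 = 0" using per1 d e c by simp
  have cr0: "cr (Bl K c (d1,d2)) (d1,d2) = 0" using crit[of "(d1,d2)"] d by simp
  have cr1: "b1*d2 - d1*b2 = 0"
    using cr0 b K c by (simp add: bq_sym)
  have NF: "mb (adj T) (Fm K (mb T (x,y))) = (B1*x*y + \<Delta>*y^2, A*x^2)" for x y
  proof -
    have L1: "qf (k0,k1,k2) (d1*x + c1*y, d2*x + c2*y) = x^2 * e1 + x*y*b1 + y^2*d1"
      using qf_lin[of "(k0,k1,k2)" d1 x c1 y d2 c2] hd1 he1 hb1 by simp
    have L2: "qf (l0,l1,l2) (d1*x + c1*y, d2*x + c2*y) = x^2 * e2 + x*y*b2 + y^2*d2"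
      using qf_lin[of "(l0,l1,l2)" d1 x c1 y d2 c2] hd2 he2 hb2 by simp
    have g1: "c2 * (x^2 * e1 + x*y*b1 + y^2*d1) - c1 * (x^2 * e2 + x*y*b2 + y^2*d2) = B1*x*y + \<Delta>*y^2"
      unfolding B1_def \<Delta>_def using p1 by algebra
    have g2: "- d2 * (x^2 * e1 + x*y*b1 + y^2*d1) + d1 * (x^2 * e2 + x*y*b2 + y^2*d2) = A*x^2"
      unfolding A_def using cr1 by algebra
    show ?thesis using g1 g2 L1 L2 by (simp add: T_def K)
  qed
  define \<Phi>' where "\<Phi>' = (\<lambda>z::complex\<times>complex. (B1 * fst z * snd z + \<Delta> * snd z^2, A * fst z^2))"
  have NF': "mb (adj T) (Fm K (mb T z)) = \<Phi>' z" for z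
    using NF[of "fst z" "snd z"] by (simp add: \<Phi>'_def)
  define S' where "S' = mm (adj T) (mm s T)"
  have comm: "cr (\<Phi>' (mb S' z)) (mb S' (\<Phi>' z)) = 0" for z
  proof -
    have "mb T (mb S' z) = sc \<Delta> (mb s (mb T z))"
      by (simp add: S'_def mb_mm mb_adj dtT)
    then have 1: "\<Phi>' (mb S' z) = sc (\<Delta>^2) (mb (adj T) (Fm K (mb s (mb T z))))"
      using NF'[of "mb S' z"] by (simp add: Fm_sc mb_sc)
    have "mb T (\<Phi>' z) = sc \<Delta> (Fm K (mb T z))"
      using NF'[of z] by (metis mb_adj dtT)
    then have 2: "mb S' (\<Phi>' z) = sc \<Delta> (mb (adj T) (mb s (Fm K (mb T z))))"
      by (simp add: S'_def mb_mm mb_sc)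
    have "cr (\<Phi>' (mb S' z)) (mb S' (\<Phi>' z)) = \<Delta>^2 * \<Delta> * (dt (adj T) * Dg K s (mb T z))"
      unfolding 1 2 cr_sc cr_mb Dg_def by simp
    then show ?thesis using aut by simp
  qed
  obtain a b cc dd where S': "S' = (a,b,cc,dd)" by (metis prod.exhaust)
  have Dpz: "Dp A B1 \<Delta> a b cc dd x y = 0" for x y
    using comm[of "(x,y)"] S' by (simp add: \<Phi>'_def Dp_def algebra_simps)
  have e0: "(e1,e2) \<noteq> (0,0)"
  proof
    assume "(e1,e2) = (0,0)"
    then have "(d1,d2) = (0,0)" using ND[of "(d1,d2)"] e by simp
    then have "c = (0,0)" using ND[of c] d by simp
    then show False using c0 by simp
  qed
  have A0: "A \<noteq> 0"
  proof
    assume A: "A = 0"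
    have "e1 * \<Delta> = d1 * (e1*c2 - c1*e2) + c1 * A" "e2 * \<Delta> = d2 * (e1*c2 - c1*e2) + c2 * A"
      unfolding A_def \<Delta>_def by algebra+
    then have "e1 * \<Delta> = 0" "e2 * \<Delta> = 0" using A p1 by auto
    then show False using D0 e0 by simp
  qed
  have dS: "a*dd - b*cc \<noteq> 0"
  proof -
    have "dt S' = \<Delta> * (dt s * \<Delta>)" by (simp add: S'_def dt_mm dt_adj dtT)
    then show ?thesis using S' D0 sdet by simp
  qed
  show ?thesis
  proof (cases "B1 = 0")
    case True
    show ?thesis
      by (rule exI[of _ T], rule exI[of _ A]) (use NF True A0 D0 dtT in auto)
  next
    case False
    have sc': "b = 0 \<and> cc = 0 \<and> a = dd" using alg1[OF A0 D0 dS Dpz False] .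
    obtain \<alpha> \<beta> \<gamma> \<delta> where s: "s = (\<alpha>,\<beta>,\<gamma>,\<delta>)" by (metis prod.exhaust)
    have mm_assoc: "mm (mm x y) z = mm x (mm y z)" for x y z :: "complex \<times> complex \<times> complex \<times> complex"
      by (cases x; cases y; cases z) (simp add: algebra_simps)
    have TadjT: "mm T (adj T) = (\<Delta>,0,0,\<Delta>)" by (simp add: T_def \<Delta>_def algebra_simps)
    have "mm T (mm S' (adj T)) = mm (mm T (adj T)) (mm s (mm T (adj T)))"
      by (simp add: S'_def mm_assoc)
    also have "\<dots> = (\<Delta>^2*\<alpha>, \<Delta>^2*\<beta>, \<Delta>^2*\<gamma>, \<Delta>^2*\<delta>)"
      by (simp add: TadjT s algebra_simps power2_eq_square)
    finally have X: "mm T (mm S' (adj T)) = (\<Delta>^2*\<alpha>, \<Delta>^2*\<beta>, \<Delta>^2*\<gamma>, \<Delta>^2*\<delta>)" .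
    have "mm T (mm S' (adj T)) = (a*\<Delta>, 0, 0, a*\<Delta>)"
      using sc' S' by (simp add: T_def \<Delta>_def algebra_simps)
    with X have "\<Delta>^2*\<beta> = 0" "\<Delta>^2*\<gamma> = 0" "\<Delta>^2*\<alpha> = \<Delta>^2*\<delta>" by auto
    then have "\<beta> = 0" "\<gamma> = 0" "\<alpha> = \<delta>" using D0 by auto
    then show ?thesis using snid s by simp
  qed
qed

definition kr :: "rat poly \<Rightarrow> rat \<times> rat \<times> rat" where
  "kr p = (coeff p 0, coeff p 1, coeff p 2)"
definition Kq :: "rat poly \<times> rat poly \<Rightarrow> (rat \<times> rat \<times> rat) \<times> (rat \<times> rat \<times> rat)" where
  "Kq f = (kr (fst f), kr (snd f))"
definition ofp :: "rat \<times> rat \<Rightarrow> complex \<times> complex" where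
  "ofp z = (of_rat (fst z), of_rat (snd z))"

lemma Fm_ofp: "Fm (KK f) (ofp z) = ofp (Fm (Kq f) z)"
  by (cases f; cases z) (simp add: KK_def Kq_def kq_def kr_def ofp_def of_rat_add of_rat_mult of_rat_power)
lemma cr_ofp: "cr (ofp z) (ofp w) = of_rat (cr z w)"
  by (cases z; cases w) (simp add: ofp_def of_rat_diff of_rat_mult)

definition jm :: "complex \<Rightarrow> complex \<Rightarrow> complex \<times> complex \<Rightarrow> complex \<times> complex" where
  "jm D A w = (D * snd w ^ 2, A * fst w ^ 2)"

lemma struct:
  assumes D0: "dt T \<noteq> 0"
    and NF: "\<forall>z. mb (adj T) (Fm K (mb T z)) = (dt T * snd z ^ 2, A * fst z ^ 2)"
  shows "Fm K (mb T w) = sc (1 / dt T) (mb T (jm (dt T) A w))"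
proof -
  have "mb (adj T) (Fm K (mb T w)) = jm (dt T) A w"
    using spec[OF NF, of w] by (simp add: jm_def)
  then have "mb T (mb (adj T) (Fm K (mb T w))) = mb T (jm (dt T) A w)" by simp
  then have "sc (dt T) (Fm K (mb T w)) = mb T (jm (dt T) A w)" by (simp add: mb_adj)
  then show ?thesis using D0 by (cases "Fm K (mb T w)"; cases "mb T (jm (dt T) A w)") (auto simp: field_simps)
qed

lemma choose_k:
  fixes T :: "complex \<times> complex \<times> complex \<times> complex"
  assumes D0: "dt T \<noteq> 0" and A0: "A \<noteq> 0"
  shows "\<exists>k::rat. fst (sc (1/dt T) (mb (adj T) (of_rat k, 1))) * snd (sc (1/dt T) (mb (adj T) (of_rat k, 1)))
     * (A^2 * fst (sc (1/dt T) (mb (adj T) (of_rat k, 1)))^6 - (dt T)^2 * snd (sc (1/dt T) (mb (adj T) (of_rat k, 1)))^6) \<noteq> 0"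
proof -
  obtain t11 t12 t21 t22 where T: "T = (t11,t12,t21,t22)" by (metis prod.exhaust)
  define D where "D = t11*t22 - t12*t21"
  have D: "dt T = D" "D \<noteq> 0" using D0 by (simp_all add: T D_def)
  define U1 where "U1 = [:-t12/D, t22/D:]"
  define U2 where "U2 = [:t11/D, -t21/D:]"
  define W where "W = smult (A^2) (U1^6) - smult (D^2) (U2^6)"
  have pu1: "poly U1 x = (t22*x - t12)/D" for x using D by (simp add: U1_def field_simps)
  have pu2: "poly U2 x = (t11 - t21*x)/D" for x using D by (simp add: U2_def field_simps)
  have U1: "U1 \<noteq> 0"
  proof
    assume "U1 = 0"
    then have "t12 = 0" "t22 = 0" using D by (auto simp: U1_def)
    then show False using D by (simp add: D_def)
  qed
  have U2: "U2 \<noteq> 0"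
  proof
    assume "U2 = 0"
    then have "t11 = 0" "t21 = 0" using D by (auto simp: U2_def)
    then show False using D by (simp add: D_def)
  qed
  have W: "W \<noteq> 0"
  proof
    assume "W = 0"
    then have "smult (A^2) (U1^6) = smult (D^2) (U2^6)" by (simp add: W_def)
    then have Wx: "A^2 * poly U1 x ^ 6 = D^2 * poly U2 x ^ 6" for x
    proof -
      assume e: "smult (A^2) (U1^6) = smult (D^2) (U2^6)"
      have "poly (smult (A^2) (U1^6)) x = poly (smult (D^2) (U2^6)) x" unfolding e ..
      then show ?thesis by (simp only: poly_smult poly_power)
    qed
    show False
    proof (cases "t22 = 0")
      case False
      define x0 where "x0 = t12/t22"
      have "poly U1 x0 = 0" using False by (simp add: pu1 x0_def)
      then have "poly U2 x0 = 0" using Wx[of x0] D by simp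
      then have "t11*t22 - t21*t12 = 0" using False D by (simp add: pu2 x0_def field_simps)
      then show False using D by (simp add: D_def algebra_simps)
    next
      case True
      then have "t21 \<noteq> 0" "t12 \<noteq> 0" using D by (auto simp: D_def)
      define x0 where "x0 = t11/t21"
      have "poly U2 x0 = 0" using \<open>t21 \<noteq> 0\<close> by (simp add: pu2 x0_def)
      then have "poly U1 x0 = 0" using Wx[of x0] A0 by simp
      then show False using True \<open>t12 \<noteq> 0\<close> D by (simp add: pu1)
    qed
  qed
  define H where "H = U1 * U2 * W"
  have "H \<noteq> 0" using U1 U2 W by (simp add: H_def)
  then obtain k :: rat where k: "poly H (of_rat k) \<noteq> 0"
    using rat_roots_zero by blast
  have "sc (1/dt T) (mb (adj T) (of_rat k, 1)) = (poly U1 (of_rat k), poly U2 (of_rat k))"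
    using D by (simp add: T pu1 pu2 field_simps)
  then show ?thesis using k D(1) by (intro exI[of _ k]) (simp add: H_def W_def)
qed

lemma core_rel:
  fixes D A u1 u2 l k' :: complex
  assumes H: "u1 * u2 * (A^2 * u1^6 - D^2 * u2^6) \<noteq> 0" and D0: "D \<noteq> 0"
   and r1: "l*u1 + k'*(D*u2^2) = D*(A*u1^2)^2/D^3"
   and r2: "l*u2 + k'*(A*u1^2) = A*(D*u2^2)^2/D^3"
  shows "l*u1*u2 + k'*(A*u1^3 + D*u2^3) = 0" and "A*u1*u2 + k'*D^2 = 0"
proof -
  have r1': "D^2*(l*u1 + k'*(D*u2^2)) = A^2*u1^4"
    using r1 D0 by (simp add: field_simps power2_eq_square power3_eq_cube power4_eq_xxxx)
  have r2': "D*(l*u2 + k'*(A*u1^2)) = A*u2^4"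
    using r2 D0 by (simp add: field_simps power2_eq_square power3_eq_cube power4_eq_xxxx)
  define s where "s = A*u1^3 - D*u2^3"
  have "A^2 * u1^6 - D^2 * u2^6 = s * (A*u1^3 + D*u2^3)" unfolding s_def by algebra
  then have s0: "s \<noteq> 0" using H by auto
  have "D^2 * s * (l*u1*u2 + k'*(A*u1^3 + D*u2^3)) = 0"
    using r1' r2' unfolding s_def by algebra
  then show "l*u1*u2 + k'*(A*u1^3 + D*u2^3) = 0" using s0 D0 by simp
  have "D^2 * s * (A*u1*u2 + k'*D^2) = 0"
    using r1' r2' unfolding s_def by algebra
  then show "A*u1*u2 + k'*D^2 = 0" using s0 D0 by simp
qed

lemma core_G:
  fixes D A u1 u2 l k' x y v :: complex
  assumes E1: "l*u1*u2 + k'*(A*u1^3 + D*u2^3) = 0" and E2: "A*u1*u2 + k'*D^2 = 0"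
    and k0: "k' \<noteq> 0" and D0: "D \<noteq> 0" and v: "v = - (l^2) / ((k'*D)^3)"
  shows "mb (adj (l*u1, k'*(D*u2^2), l*u2, k'*(A*u1^2))) (jm D A (mb (l*u1, k'*(D*u2^2), l*u2, k'*(A*u1^2)) (x,y)))
     = sc (k'^2*A*D*(A*u1^3 - D*u2^3)*l*u1*u2) (2*x*y - y^2, v*x^2 - y^2)"
proof -
  define s where "s = A*u1^3 - D*u2^3"
  have c1: "k'*(A*u1^2) * (D*(l*u2*x + k'*(A*u1^2)*y)^2) - k'*(D*u2^2) * (A*(l*u1*x + k'*(D*u2^2)*y)^2)
      = k'^2*A*D*s*y*(2*l*u1*u2*x + k'*(A*u1^3 + D*u2^3)*y)"
    unfolding s_def by algebra
  also have "\<dots> = k'^2*A*D*s*l*u1*u2 * (2*x*y - y^2)"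
  proof -
    have "k'*(A*u1^3 + D*u2^3) = - (l*u1*u2)" using E1 by algebra
    then show ?thesis by (simp add: algebra_simps power2_eq_square)
  qed
  finally have g1: "k'*(A*u1^2) * (D*(l*u2*x + k'*(A*u1^2)*y)^2) - k'*(D*u2^2) * (A*(l*u1*x + k'*(D*u2^2)*y)^2)
      = k'^2*A*D*s*l*u1*u2 * (2*x*y - y^2)" .
  have c2: "- (l*u2) * (D*(l*u2*x + k'*(A*u1^2)*y)^2) + l*u1 * (A*(l*u1*x + k'*(D*u2^2)*y)^2)
      = l^3*s*x^2 - l*k'^2*A*D*u1*u2*s*y^2"
    unfolding s_def by algebra
  have vv: "k'^2*A*D*s*l*u1*u2 * v = l^3 * s"
  proof -
    have "A*u1*u2 = - k'*D^2" using E2 by algebra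
    have "k'^2*A*D*s*l*u1*u2 * v = k'^2*D*s*l*(A*u1*u2) * v" by (simp add: algebra_simps)
    also have "\<dots> = k'^2*D*s*l*(- k'*D^2) * v" using \<open>A*u1*u2 = - k'*D^2\<close> by simp
    finally have "k'^2*A*D*s*l*u1*u2 * v = k'^2*D*s*l*(- k'*D^2) * v" .
    also have "\<dots> = l^3 * s" using k0 D0 unfolding v by (simp add: field_simps power2_eq_square power3_eq_cube)
    finally show ?thesis .
  qed
  have g2: "- (l*u2) * (D*(l*u2*x + k'*(A*u1^2)*y)^2) + l*u1 * (A*(l*u1*x + k'*(D*u2^2)*y)^2)
      = k'^2*A*D*s*l*u1*u2 * (v*x^2 - y^2)"
  proof -
    have "k'^2*A*D*s*l*u1*u2 * (v*x^2 - y^2) = (k'^2*A*D*s*l*u1*u2 * v)*x^2 - k'^2*A*D*s*l*u1*u2*y^2"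
      by (simp add: algebra_simps)
    also have "\<dots> = l^3 * s * x^2 - k'^2*A*D*s*l*u1*u2*y^2" unfolding vv ..
    finally have X: "k'^2*A*D*s*l*u1*u2 * (v*x^2 - y^2) = l^3 * s * x^2 - k'^2*A*D*s*l*u1*u2*y^2" .
    show ?thesis unfolding c2 using X by algebra
  qed
  show ?thesis using g1 g2 by (simp add: jm_def s_def algebra_simps)
qed

lemma cr_scR: "cr z (sc l w) = l * cr z w"
  by (cases z; cases w) (simp add: algebra_simps)
lemma cr_scL: "cr (sc l z) w = l * cr z w"
  by (cases z; cases w) (simp add: algebra_simps)
lemma sc_sc: "sc a (sc b z) = sc (a*b) z"
  by (cases z) simp
lemma sc_1: "sc 1 z = z"
  by (cases z) simp
lemma cr_self: "cr z z = 0"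
  by (cases z) simp

lemma part2:
  assumes deg: "rat_map_degree f 2"
    and D0: "dt T \<noteq> 0" and A0: "A \<noteq> 0"
    and NF: "\<forall>z. mb (adj T) (Fm (KK f) (mb T z)) = (dt T * snd z ^ 2, A * fst z ^ 2)"
  shows "\<exists>v. v \<noteq> 0 \<and> v \<noteq> 4 \<and> lin_conj_over_Q 2 f (psi v)"
proof -
  let ?K = "KK f"
  define D where "D = dt T"
  have D0': "D \<noteq> 0" using D0 by (simp add: D_def)
  have ST: "Fm ?K (mb T w) = sc (1/D) (mb T (jm D A w))" for w
    using struct[OF D0 NF] by (simp add: D_def)
  obtain k :: rat where kH: "fst (sc (1/dt T) (mb (adj T) (of_rat k, 1))) * snd (sc (1/dt T) (mb (adj T) (of_rat k, 1)))
     * (A^2 * fst (sc (1/dt T) (mb (adj T) (of_rat k, 1)))^6 - (dt T)^2 * snd (sc (1/dt T) (mb (adj T) (of_rat k, 1)))^6) \<noteq> 0"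
    using choose_k[OF D0 A0] by blast
  define x where "x = (of_rat k :: complex)"
  obtain u1 u2 where u: "sc (1/D) (mb (adj T) (x, 1)) = (u1,u2)"
    by (cases "sc (1/D) (mb (adj T) (x, 1))")
  have H: "u1 * u2 * (A^2 * u1^6 - D^2 * u2^6) \<noteq> 0"
    using kH u by (simp add: D_def x_def)
  have Tu: "mb T (u1,u2) = (x, 1)"
  proof -
    have "mb T (u1,u2) = sc (1/D) (mb T (mb (adj T) (x,1)))" by (simp add: u[symmetric] mb_sc)
    also have "\<dots> = (x,1)" using D0' by (simp add: mb_adj D_def[symmetric])
    finally show ?thesis .
  qed
  define J where "J = jm D A"
  define s where "s = Fm ?K (x,1)"
  define t where "t = Fm ?K s"
  have s_eq: "s = sc (1/D) (mb T (J (u1,u2)))" unfolding s_def J_def using ST[of "(u1,u2)"] Tu by simp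
  have t_eq: "t = sc (1/D^3) (mb T (J (J (u1,u2))))"
  proof -
    have "t = sc ((1/D)^2) (Fm ?K (mb T (J (u1,u2))))" unfolding t_def s_eq Fm_sc ..
    also have "\<dots> = sc (1/D^3) (mb T (J (J (u1,u2))))"
      unfolding ST sc_sc J_def by (simp add: power2_eq_square power3_eq_cube)
    finally show ?thesis .
  qed
  define X1 where "X1 = cr (x,1) s"
  define X2 where "X2 = cr (x,1) t"
  define X3 where "X3 = cr s t"
  have X1v: "X1 = cr (u1,u2) (J (u1,u2))"
    unfolding X1_def s_eq Tu[symmetric] cr_scR cr_mb using D0' by (simp add: D_def)
  have X2v: "X2 = (1/D^2) * cr (u1,u2) (J (J (u1,u2)))"
    unfolding X2_def t_eq Tu[symmetric] cr_scR cr_mb using D0' by (simp add: D_def power2_eq_square power3_eq_cube)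
  have X3v: "X3 = (1/D^3) * cr (J (u1,u2)) (J (J (u1,u2)))"
    unfolding X3_def t_eq s_eq cr_scR cr_scL cr_mb using D0' by (simp add: D_def power2_eq_square power3_eq_cube)
  have fac: "A^2 * u1^6 - D^2 * u2^6 = (A*u1^3 - D*u2^3) * (A*u1^3 + D*u2^3)" by algebra
  have X1n: "X1 \<noteq> 0"
  proof -
    have "X1 = A*u1^3 - D*u2^3" unfolding X1v J_def jm_def by (simp add: algebra_simps power2_eq_square power3_eq_cube)
    then show ?thesis using H fac by auto
  qed
  have X2n: "X2 \<noteq> 0"
  proof -
    have "cr (u1,u2) (J (J (u1,u2))) = A*D*u1*u2*(D*u2^3 - A*u1^3)" unfolding J_def jm_def by simp algebra
    moreover have "D*u2^3 - A*u1^3 \<noteq> 0" using H fac by auto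
    ultimately show ?thesis unfolding X2v using H A0 D0' by auto
  qed
  have X3n: "X3 \<noteq> 0"
  proof -
    have "cr (J (u1,u2)) (J (J (u1,u2))) = A*D*(D^2*u2^6 - A^2*u1^6)" unfolding J_def jm_def by simp algebra
    moreover have "D^2*u2^6 - A^2*u1^6 \<noteq> 0" using H by auto
    ultimately show ?thesis unfolding X3v using H A0 D0' by auto
  qed
  define rq where "rq = (k, 1::rat)"
  define sq where "sq = Fm (Kq f) rq"
  define tq where "tq = Fm (Kq f) sq"
  have ors: "ofp rq = (x,1)" by (simp add: rq_def ofp_def x_def)
  have oss: "ofp sq = s" unfolding sq_def s_def ors[symmetric] Fm_ofp ..
  have ots: "ofp tq = t" unfolding tq_def t_def oss[symmetric] Fm_ofp ..
  define X1q where "X1q = cr rq sq"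
  have X1qv: "of_rat X1q = X1" unfolding X1q_def X1_def cr_ofp[symmetric] ors oss ..
  define lq where "lq = cr tq sq / X1q"
  define kq' where "kq' = cr rq tq / X1q"
  define lc where "lc = (of_rat lq :: complex)"
  define kc where "kc = (of_rat kq' :: complex)"
  have lcv: "lc = - X3 / X1"
    unfolding lc_def lq_def of_rat_divide X1qv cr_ofp[symmetric] ots oss X3_def
    by (cases s; cases t) (simp add: algebra_simps)
  have kcv: "kc = X2 / X1"
    unfolding kc_def kq'_def of_rat_divide X1qv cr_ofp[symmetric] ots ors X2_def ..
  have lc0: "lc \<noteq> 0" using lcv X1n X3n by simp
  have kc0: "kc \<noteq> 0" using kcv X1n X2n by simp
  obtain s1 s2 where s12: "s = (s1,s2)" by (cases s)
  obtain t1 t2 where t12: "t = (t1,t2)" by (cases t)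
  obtain s1q s2q where s12q: "sq = (s1q,s2q)" by (cases sq)
  have s1q: "of_rat s1q = s1" "of_rat s2q = s2" using oss s12 s12q by (auto simp: ofp_def)
  define \<sigma>q where "\<sigma>q = (lq*k, kq'*s1q, lq, kq'*s2q)"
  define \<sigma>c where "\<sigma>c = (lc*x, kc*s1, lc, kc*s2)"
  have \<sigma>c_of: "(of_rat (lq*k), of_rat (kq'*s1q), of_rat lq, of_rat (kq'*s2q)) = \<sigma>c"
    by (simp add: \<sigma>c_def of_rat_mult lc_def kc_def x_def s1q)
  have dt\<sigma>: "dt \<sigma>c = lc * kc * X1"
    by (simp add: \<sigma>c_def X1_def s12 algebra_simps)
  have dt\<sigma>0: "dt \<sigma>c \<noteq> 0" using dt\<sigma> lc0 kc0 X1n by simp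
  have cram: "mb \<sigma>c (1,1) = t"
  proof -
    have "X1 * t1 = cr t s * x + cr (x,1) t * s1" "X1 * t2 = cr t s * 1 + cr (x,1) t * s2"
      by (simp_all add: X1_def s12 t12 algebra_simps)
    moreover have "lc = cr t s / X1" using lcv unfolding X3_def
      by (simp add: s12 t12 algebra_simps divide_simps)
    ultimately show ?thesis using X1n unfolding \<sigma>c_def kcv X2_def
      by (simp add: t12 field_simps)
  qed
  define k' where "k' = kc / D"
  have k'0: "k' \<noteq> 0" using kc0 D0' by (simp add: k'_def)
  define R where "R = (lc*u1, k'*(D*u2^2), lc*u2, k'*(A*u1^2))"
  obtain t11 t12 t21 t22 where T: "T = (t11,t12,t21,t22)" by (metis prod.exhaust)
  have e12: "t11*u1 + t12*u2 = x" "t21*u1 + t22*u2 = 1" using Tu T by auto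
  have "mb T (J (u1,u2)) = sc D s"
    using s_eq D0' by (simp add: sc_sc sc_1)
  then have e34: "t11*(D*u2^2) + t12*(A*u1^2) = D*s1" "t21*(D*u2^2) + t22*(A*u1^2) = D*s2"
    using T s12 by (auto simp: J_def jm_def)
  have \<sigma>R: "\<sigma>c = mm T R"
  proof -
    have a: "t11*(lc*u1) + t12*(lc*u2) = lc*x"
      using e12(1) by (metis distrib_left mult.left_commute)
    have b: "t21*(lc*u1) + t22*(lc*u2) = lc"
      using e12(2) by (metis distrib_left mult.left_commute mult_1_right)
    have c: "t11*(k'*(D*u2^2)) + t12*(k'*(A*u1^2)) = kc*s1"
    proof -
      have "t11*(k'*(D*u2^2)) + t12*(k'*(A*u1^2)) = k' * (D*s1)"
        using e34(1) by (metis distrib_left mult.left_commute)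
      then show ?thesis using D0' by (simp add: k'_def)
    qed
    have d: "t21*(k'*(D*u2^2)) + t22*(k'*(A*u1^2)) = kc*s2"
    proof -
      have "t21*(k'*(D*u2^2)) + t22*(k'*(A*u1^2)) = k' * (D*s2)"
        using e34(2) by (metis distrib_left mult.left_commute)
      then show ?thesis using D0' by (simp add: k'_def)
    qed
    show ?thesis unfolding \<sigma>c_def R_def T mm_simp a b c d ..
  qed
  have rel: "mb R (1,1) = sc (1/D^3) (J (J (u1,u2)))"
  proof -
    have "mb T (mb R (1,1)) = mb T (sc (1/D^3) (J (J (u1,u2))))"
      using cram t_eq \<sigma>R by (simp add: mb_mm mb_sc)
    then have "mb (adj T) (mb T (mb R (1,1))) = mb (adj T) (mb T (sc (1/D^3) (J (J (u1,u2)))))" by simp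
    then have "sc D (mb R (1,1)) = sc D (sc (1/D^3) (J (J (u1,u2))))" by (simp add: adj_mb D_def)
    then show ?thesis using D0' by (cases "mb R (1,1)"; cases "sc (1/D^3) (J (J (u1,u2)))") auto
  qed
  have r1: "lc*u1 + k'*(D*u2^2) = D*(A*u1^2)^2/D^3" and r2: "lc*u2 + k'*(A*u1^2) = A*(D*u2^2)^2/D^3"
    using rel by (simp_all add: R_def J_def jm_def)
  note E = core_rel[OF H D0' r1 r2]
  define v where "v = - (lq^2) / (kq'^3)"
  have vc: "(of_rat v :: complex) = - (lc^2) / ((k'*D)^3)"
    using D0' by (simp add: v_def of_rat_divide of_rat_minus of_rat_power lc_def kc_def k'_def)
  define hh where "hh = k'^2*A*D*(A*u1^3 - D*u2^3)*lc*u1*u2"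
  have G: "mb (adj R) (jm D A (mb R (a,b))) = sc hh (2*a*b - b^2, of_rat v*a^2 - b^2)" for a b
    unfolding R_def hh_def by (rule core_G[OF E(1) E(2) k'0 D0' vc])
  have Gc: "mb (adj \<sigma>c) (Fm ?K (mb \<sigma>c z)) = mb (adj R) (jm D A (mb R z))" for z
  proof -
    have "mb (adj \<sigma>c) (Fm ?K (mb \<sigma>c z)) = mb (adj R) (mb (adj T) (sc (1/D) (mb T (jm D A (mb R z)))))"
      unfolding \<sigma>R adj_mm mb_mm ST ..
    also have "\<dots> = mb (adj R) (jm D A (mb R z))"
      using D0' by (simp add: mb_sc adj_mb D_def[symmetric] sc_sc sc_1)
    finally show ?thesis .
  qed
  have Psi: "map_P1 2 (psi v) z = (2*fst z*snd z - snd z^2, of_rat v*fst z^2 - snd z^2)" for z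
  proof -
    have "coeff [:- 1, 2:] 2 = (0::rat)" "coeff [:- 1, 0, v:] 2 = v" by (simp_all add: numeral_2_eq_2)
    then show ?thesis by (cases z) (simp add: map_P1_Fm psi_def KK_def kq_def algebra_simps)
  qed
  have main: "sc hh (mb \<sigma>c (map_P1 2 (psi v) z)) = sc (dt \<sigma>c) (Fm ?K (mb \<sigma>c z))" for z
  proof -
    obtain a b where z: "z = (a,b)" by (cases z)
    have "sc (dt \<sigma>c) (Fm ?K (mb \<sigma>c z)) = mb \<sigma>c (mb (adj \<sigma>c) (Fm ?K (mb \<sigma>c z)))"
      by (simp add: mb_adj)
    also have "\<dots> = mb \<sigma>c (sc hh (2*a*b - b^2, of_rat v*a^2 - b^2))" unfolding Gc z G ..
    also have "\<dots> = sc hh (mb \<sigma>c (map_P1 2 (psi v) z))"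
      unfolding Psi z fst_conv snd_conv by (rule mb_sc)
    finally show ?thesis by simp
  qed
  have v0: "v \<noteq> 0"
  proof -
    have "lq \<noteq> 0" using lc0 by (simp add: lc_def)
    moreover have "kq' \<noteq> 0" using kc0 by (simp add: kc_def)
    ultimately show ?thesis by (simp add: v_def)
  qed
  have v4: "v \<noteq> 4"
  proof
    assume v4: "v = 4"
    have "map_P1 2 (psi v) (1,2) = (2*1*2 - 2^2, of_rat v * 1^2 - 2^2)" using Psi[of "(1,2)"] by simp
    then have "map_P1 2 (psi v) (1,2) = (0,0)" using v4 by simp
    then have "sc (dt \<sigma>c) (Fm ?K (mb \<sigma>c (1,2))) = (0,0)" using main[of "(1,2)"] by (simp add: \<sigma>c_def)
    then have "Fm ?K (mb \<sigma>c (1,2)) = (0,0)" using dt\<sigma>0 by (cases "Fm ?K (mb \<sigma>c (1,2))") auto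
    then have "mb \<sigma>c (1,2) = (0,0)" using ND[OF deg] by blast
    then have "mb (adj \<sigma>c) (mb \<sigma>c (1,2)) = (0,0)" by (simp add: \<sigma>c_def)
    then have "sc (dt \<sigma>c) (1,2) = (0,0)" by (simp add: adj_mb)
    then show False using dt\<sigma>0 by simp
  qed
  have lin: "lin_conj_over_Q 2 f (psi v)"
    unfolding lin_conj_over_Q_def
  proof (intro exI conjI allI impI)
    show "lq * k * (kq' * s2q) - kq' * s1q * lq \<noteq> 0"
    proof -
      have "of_rat (lq * k * (kq' * s2q) - kq' * s1q * lq) = dt \<sigma>c"
        by (simp add: \<sigma>c_def of_rat_mult of_rat_diff lc_def kc_def x_def s1q algebra_simps)
      then show ?thesis using dt\<sigma>0 by auto
    qed
    fix z :: "complex \<times> complex"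
    have "cr (mb \<sigma>c (map_P1 2 (psi v) z)) (map_P1 2 f (mb \<sigma>c z)) = 0"
    proof -
      let ?P = "mb \<sigma>c (map_P1 2 (psi v) z)"
      have "dt \<sigma>c * cr ?P (map_P1 2 f (mb \<sigma>c z)) = cr ?P (sc (dt \<sigma>c) (Fm ?K (mb \<sigma>c z)))"
        by (simp add: cr_scR map_P1_Fm)
      also have "\<dots> = 0" unfolding main[symmetric] cr_scR cr_self by simp
      finally show ?thesis using dt\<sigma>0 by simp
    qed
    then show "proj_eq (mob (of_rat (lq * k), of_rat (kq' * s1q), of_rat lq, of_rat (kq' * s2q)) (map_P1 2 (psi v) z))
          (map_P1 2 f (mob (of_rat (lq * k), of_rat (kq' * s1q), of_rat lq, of_rat (kq' * s2q)) z))"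
      unfolding \<sigma>c_of mob_mb proj_eq_cr .
  qed
  show ?thesis using v0 v4 lin by blast
qed

theorem lemma2p6:
  fixes f :: "rat poly \<times> rat poly"
  assumes "rat_map_degree f 2"
    and "\<exists>z. is_critical_point 2 f z \<and> two_periodic 2 f z"
    and "Aut_nontrivial 2 f"
  shows "\<exists>v :: rat. v \<noteq> 0 \<and> v \<noteq> 4 \<and> lin_conj_over_Q 2 f (psi v)"
proof -
  obtain c where c: "is_critical_point 2 f c" "two_periodic 2 f c" using assms(2) by blast
  obtain s where s: "in_Aut 2 f s" "\<not> is_identity_mob s"
    using assms(3) unfolding Aut_nontrivial_def by blast
  let ?K = "KK f"
  have ND': "\<And>z. Fm ?K z = (0,0) \<Longrightarrow> z = (0,0)" using ND[OF assms(1)] by blast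
  have c0: "c \<noteq> (0,0)" using crit0(1)[OF c(1)] .
  obtain e0 where e0: "cr c e0 \<noteq> 0" "cr (Bl ?K c e0) (Fm ?K c) = 0" using crit0(2)[OF c(1)] by blast
  have crit: "\<And>e. cr (Bl ?K c e) (Fm ?K c) = 0" using crit_all[OF e0] .
  have per1: "cr (Fm ?K (Fm ?K c)) c = 0" and per2: "cr (Fm ?K c) c \<noteq> 0"
    using c(2) by (auto simp: two_periodic_def proj_eq_cr map_P1_Fm)
  have aut: "\<And>z. Dg ?K s z = 0" using s(1) aut_ext unfolding in_Aut_def by blast
  have sdet: "dt s \<noteq> 0" using s(1) by (simp add: in_Aut_def mob_det_dt)
  have snid: "\<not> (fst (snd s) = 0 \<and> fst (snd (snd s)) = 0 \<and> fst s = snd (snd (snd s)))"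
    using s(2) by (cases s) (auto simp: is_identity_mob_def)
  obtain T A where TA: "dt T \<noteq> 0" "A \<noteq> 0"
      "\<forall>z. mb (adj T) (Fm ?K (mb T z)) = (dt T * snd z ^ 2, A * fst z ^ 2)"
    using part1[OF ND' c0 crit per1 per2 aut sdet snid] by blast
  show ?thesis using part2[OF assms(1) TA] .
qed

end
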